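(* The functor $\mathrm K\colon\mathbf{Set}\to\mathbf{Sgp}_{\mathbb C^\theta}$ defined by $\mathrm K(X)=((\mathrm L^+(X),\mu_X),\Delta_X)$ and $\mathrm K(f)=\mathrm L^+(f)$ is not an equivalence of categories.
   Context: For a set $X$, $\mathrm L^+(X)=\coprod_{n>0}X^n$ is the set of non-empty lists $[x_1,\dots,x_n]$; $\mathrm L^+(f)[x_1,\dots,x_n]=[f(x_1),\dots,f(x_n)]$. $\mu_X\colon\mathrm L^+(\mathrm L^+(X))\to\mathrm L^+(X)$ is concatenation, so $(\mathrm L^+(X),\mu_X)$ is the free semigroup on $X$ (product = concatenation). $\Delta_X[x_1,\dots,x_n]=[[x_1,\dots,x_n],[x_2,\dots,x_n],\dots,[x_n]]$ and $\varepsilon_X[x_1,\dots,x_n]=x_1$. $\mathbf{Sgp}$ is the category of semigroups. $\mathbb C^\theta$ is the comonad on $\mathbf{Sgp}$ sending a semigroup $(X,\cdot)$ to the set $\mathrm L^+(X)$ with the semigroup product $[x_1,\dots,x_n]\ast[y_1,\dots,y_m]=[x_1y_1,x_2y_1,\dots,x_ny_1,y_1,y_2,\dots,y_m]$, acting on morphisms by $\mathrm L^+$, with comultiplication $\Delta_X$ and counit $\varepsilon_X$. $\mathbf{Sgp}_{\mathbb C^\theta}$ is the category of $\mathbb C^\theta$-coalgebras: semigroups $Y$ with a semigroup morphism $\delta\colon Y\to\mathrm C^\theta(Y)$ satisfying $\Delta_Y\delta=\mathrm L^+(\delta)\delta$ and $\varepsilon_Y\delta=\mathrm{id}_Y$,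 with morphisms the semigroup morphisms commuting with the coactions. (For each set $X$, $\Delta_X$ is a semigroup morphism from $(\mathrm L^+(X),\mu_X)$ to $\mathrm C^\theta(\mathrm L^+(X),\mu_X)$, so $\mathrm K$ is well defined.) *)

theory Defs
  imports Main
begin

definition semigroup_on :: "'b set \<Rightarrow> ('b \<Rightarrow> 'b \<Rightarrow> 'b) \<Rightarrow> bool" where
  "semigroup_on Y m \<longleftrightarrow> (\<forall>x\<in>Y. \<forall>y\<in>Y. m x y \<in> Y) \<and>
     (\<forall>x\<in>Y. \<forall>y\<in>Y. \<forall>z\<in>Y. m (m x y) z = m x (m y z))"

definition Lp :: "'a set \<Rightarrow> 'a list set" where
  "Lp X = {xs. xs \<noteq> [] \<and> set xs \<subseteq> X}"

definition Delta :: "'a list \<Rightarrow> 'a list list" where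
  "Delta xs = map (\<lambda>i. drop i xs) [0..<length xs]"

definition theta_mult :: "('b \<Rightarrow> 'b \<Rightarrow> 'b) \<Rightarrow> 'b list \<Rightarrow> 'b list \<Rightarrow> 'b list" where
  "theta_mult m xs ys = map (\<lambda>x. m x (hd ys)) xs @ ys"

definition is_coalg :: "'b set \<Rightarrow> ('b \<Rightarrow> 'b \<Rightarrow> 'b) \<Rightarrow> ('b \<Rightarrow> 'b list) \<Rightarrow> bool" where
  "is_coalg Y m \<delta> \<longleftrightarrow> semigroup_on Y m \<and>
     (\<forall>y\<in>Y. \<delta> y \<in> Lp Y) \<and>
     (\<forall>x\<in>Y. \<forall>y\<in>Y. \<delta> (m x y) = theta_mult m (\<delta> x) (\<delta> y)) \<and>
     (\<forall>y\<in>Y. Delta (\<delta> y) = map \<delta> (\<delta> y)) \<and>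
     (\<forall>y\<in>Y. hd (\<delta> y) = y)"

definition coalg_hom ::
  "'b set \<Rightarrow> ('b \<Rightarrow> 'b \<Rightarrow> 'b) \<Rightarrow> ('b \<Rightarrow> 'b list) \<Rightarrow>
   'c set \<Rightarrow> ('c \<Rightarrow> 'c \<Rightarrow> 'c) \<Rightarrow> ('c \<Rightarrow> 'c list) \<Rightarrow> ('b \<Rightarrow> 'c) \<Rightarrow> bool" where
  "coalg_hom Y m \<delta> Y' m' \<delta>' h \<longleftrightarrow>
     (\<forall>y\<in>Y. h y \<in> Y') \<and>
     (\<forall>x\<in>Y. \<forall>y\<in>Y. h (m x y) = m' (h x) (h y)) \<and>
     (\<forall>y\<in>Y. \<delta>' (h y) = map h (\<delta> y))"

(* K(X) = ((L^+(X), concatenation), Delta_X), K(f) = L^+(f) = map f.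
   Objects of Set are sets X :: 'a set, coalgebras have carriers in 'b. *)

definition K_faithful :: "'a itself \<Rightarrow> bool" where
  "K_faithful (_ :: 'a itself) \<longleftrightarrow>
     (\<forall>(X::'a set) (X'::'a set) f g. f ` X \<subseteq> X' \<longrightarrow> g ` X \<subseteq> X' \<longrightarrow>
        (\<forall>xs\<in>Lp X. map f xs = map g xs) \<longrightarrow> (\<forall>x\<in>X. f x = g x))"

definition K_full :: "'a itself \<Rightarrow> bool" where
  "K_full (_ :: 'a itself) \<longleftrightarrow>
     (\<forall>(X::'a set) (X'::'a set) h.
        coalg_hom (Lp X) (@) Delta (Lp X') (@) Delta h \<longrightarrow>
        (\<exists>f. f ` X \<subseteq> X' \<and> (\<forall>xs\<in>Lp X. h xs = map f xs)))"

definition K_ess_surj :: "'a itself \<Rightarrow> 'b itself \<Rightarrow> bool" where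
  "K_ess_surj (_ :: 'a itself) (_ :: 'b itself) \<longleftrightarrow>
     (\<forall>(Y::'b set) m \<delta>. is_coalg Y m \<delta> \<longrightarrow>
        (\<exists>(X::'a set) (h::'a list \<Rightarrow> 'b) (k::'b \<Rightarrow> 'a list).
           coalg_hom (Lp X) (@) Delta Y m \<delta> h \<and>
           coalg_hom Y m \<delta> (Lp X) (@) Delta k \<and>
           (\<forall>xs\<in>Lp X. k (h xs) = xs) \<and> (\<forall>y\<in>Y. h (k y) = y)))"

definition K_equivalence :: "'a itself \<Rightarrow> 'b itself \<Rightarrow> bool" where
  "K_equivalence ta tb \<longleftrightarrow> K_faithful ta \<and> K_full ta \<and> K_ess_surj ta tb"

end

theory Submission
  imports Defs
begin

definition mu0 :: "nat \<Rightarrow> nat \<Rightarrow> nat" where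
  "mu0 c d = 2 * (c div 2) + d"

definition dl0 :: "nat \<Rightarrow> nat list" where
  "dl0 c = map (\<lambda>i. 2 * (c div 2 - i) + c mod 2) [0..<c div 2]"

lemma len_dl0[simp]: "length (dl0 c) = c div 2" by (simp add: dl0_def)

lemma nth_dl0[simp]: "i < c div 2 \<Longrightarrow> dl0 c ! i = 2 * (c div 2 - i) + c mod 2"
  by (simp add: dl0_def)

lemma hd_dl0: "2 \<le> c \<Longrightarrow> hd (dl0 c) = c"
  by (simp add: dl0_def hd_map upt_rec)

lemma dl0_ne: "2 \<le> c \<Longrightarrow> dl0 c \<noteq> []"
  by (simp add: dl0_def)

lemma set_dl0: "set (dl0 c) \<subseteq> {c. 2 \<le> c}"
  by (auto simp: dl0_def)

lemma dl0_mult: "2 \<le> c \<Longrightarrow> 2 \<le> d \<Longrightarrow> dl0 (mu0 c d) = theta_mult mu0 (dl0 c) (dl0 d)"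
proof (rule nth_equalityI)
  assume c: "2 \<le> c" and d: "2 \<le> d"
  have e1: "mu0 c d div 2 = c div 2 + d div 2" "mu0 c d mod 2 = d mod 2"
    by (simp_all add: mu0_def)
  show "length (dl0 (mu0 c d)) = length (theta_mult mu0 (dl0 c) (dl0 d))"
    using e1 by (simp add: theta_mult_def)
  fix i assume "i < length (dl0 (mu0 c d))"
  hence i: "i < c div 2 + d div 2" using e1 by simp
  show "dl0 (mu0 c d) ! i = theta_mult mu0 (dl0 c) (dl0 d) ! i"
  proof (cases "i < c div 2")
    case True
    have "2 * (c div 2 + d div 2 - i) + d mod 2 = 2 * (c div 2 - i) + d"
    proof -
      have "c div 2 + d div 2 - i = (c div 2 - i) + d div 2" using True by simp
      moreover have "2 * (d div 2) + d mod 2 = d" by simp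
      ultimately show ?thesis by (simp add: add_mult_distrib2)
    qed
    then show ?thesis using e1 i hd_dl0[OF d] True
      by (simp add: theta_mult_def nth_append mu0_def)
  next
    case False
    then show ?thesis using e1 i
      by (simp add: theta_mult_def nth_append mu0_def)
  qed
qed

lemma Delta_dl0: "Delta (dl0 c) = map dl0 (dl0 c)"
proof (rule nth_equalityI)
  show "length (Delta (dl0 c)) = length (map dl0 (dl0 c))" by (simp add: Delta_def)
  fix i assume "i < length (Delta (dl0 c))"
  hence i: "i < c div 2" by (simp add: Delta_def)
  have "drop i (dl0 c) = dl0 (dl0 c ! i)"
  proof (rule nth_equalityI)
    show "length (drop i (dl0 c)) = length (dl0 (dl0 c ! i))" using i by simp
    fix j assume "j < length (drop i (dl0 c))"
    then show "drop i (dl0 c) ! j = dl0 (dl0 c ! i) ! j" using i by simp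
  qed
  then show "Delta (dl0 c) ! i = map dl0 (dl0 c) ! i" using i by (simp add: Delta_def)
qed

lemma coalg0: "is_coalg {c. 2 \<le> c} mu0 dl0"
  unfolding is_coalg_def semigroup_on_def Lp_def
  using dl0_mult hd_dl0 dl0_ne set_dl0 Delta_dl0
  by (auto simp: mu0_def)

lemma Delta_map: "Delta (map f xs) = map (map f) (Delta xs)"
  by (simp add: Delta_def drop_map)

theorem corollary5p4:
  assumes "infinite (UNIV :: 'b set)"
  shows "\<not> K_equivalence TYPE('a) TYPE('b)"
proof
  assume "K_equivalence TYPE('a) TYPE('b)"
  hence es: "K_ess_surj TYPE('a) TYPE('b)" by (simp add: K_equivalence_def)
  obtain e :: "nat \<Rightarrow> 'b" where e: "inj e"
    using assms infinite_countable_subset by blast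
  have ie[simp]: "inv e (e x) = x" for x using e by simp
  define Y where "Y = e ` {c. 2 \<le> c}"
  define M where "M = (\<lambda>x y. e (mu0 (inv e x) (inv e y)))"
  define D where "D = (\<lambda>y. map e (dl0 (inv e y)))"
  have co: "is_coalg Y M D"
  proof -
    note c0 = coalg0[unfolded is_coalg_def semigroup_on_def Lp_def]
    have sg: "semigroup_on Y M"
      using c0 unfolding semigroup_on_def Y_def M_def by auto
    have l: "\<forall>y\<in>Y. D y \<in> Lp Y"
    proof
      fix y assume "y \<in> Y"
      then obtain c where c: "2 \<le> c" "y = e c" unfolding Y_def by blast
      have s: "set (map e (dl0 c)) \<subseteq> Y"
        unfolding Y_def set_map by (rule image_mono[OF set_dl0])
      have dy: "D y = map e (dl0 c)" using c(2) unfolding D_def by simp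
      have ne: "map e (dl0 c) \<noteq> []" using dl0_ne[OF c(1)] by simp
      show "D y \<in> Lp Y" unfolding dy Lp_def using s ne by blast
    qed
    have m: "\<forall>x\<in>Y. \<forall>y\<in>Y. D (M x y) = theta_mult M (D x) (D y)"
    proof (intro ballI)
      fix x y assume "x \<in> Y" "y \<in> Y"
      then obtain c d where c: "2 \<le> c" "x = e c" and d: "2 \<le> d" "y = e d"
        unfolding Y_def by auto
      have "D (M x y) = map e (theta_mult mu0 (dl0 c) (dl0 d))"
        using c d by (simp add: D_def M_def dl0_mult)
      also have "\<dots> = theta_mult M (D x) (D y)"
        using c d dl0_ne[OF d(1)]
        by (simp add: D_def M_def theta_mult_def hd_map)
      finally show "D (M x y) = theta_mult M (D x) (D y)" .
    qed
    have dd: "\<forall>y\<in>Y. Delta (D y) = map D (D y)"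
      unfolding Y_def D_def by (auto simp: Delta_map Delta_dl0)
    have h: "\<forall>y\<in>Y. hd (D y) = y"
      unfolding Y_def D_def by (auto simp: hd_map dl0_ne hd_dl0)
    show ?thesis unfolding is_coalg_def by (intro conjI sg l m dd h)
  qed
  obtain X :: "'a set" and h :: "'a list \<Rightarrow> 'b" and k where
    hk: "coalg_hom Y M D (Lp X) (@) Delta k" "\<forall>y\<in>Y. h (k y) = y"
    using es[unfolded K_ess_surj_def, rule_format, OF co] by (elim exE conjE)
  have y2: "e 2 \<in> Y" and y3: "e 3 \<in> Y" by (auto simp: Y_def)
  have eqM: "M (e 2) (e 3) = M (e 3) (e 3)" by (simp add: M_def mu0_def)
  have hm: "\<forall>x\<in>Y. \<forall>y\<in>Y. k (M x y) = k x @ k y"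
    using hk(1) unfolding coalg_hom_def by (elim conjE)
  have a1: "k (M (e 2) (e 3)) = k (e 2) @ k (e 3)" using hm y2 y3 by blast
  have a2: "k (M (e 3) (e 3)) = k (e 3) @ k (e 3)" using hm y3 by blast
  have "k (e 2) @ k (e 3) = k (e 3) @ k (e 3)" using a1 a2 eqM by simp
  hence "k (e 2) = k (e 3)" by simp
  hence "h (k (e 2)) = h (k (e 3))" by simp
  hence "e 2 = e 3" using hk(2) y2 y3 by simp
  thus False using e by (simp add: inj_eq)
qed

end
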